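(* Let $G=(V,E)$ be a finite simple undirected graph with a coloring $\mathcal{C}$ whose vertex color classes are $V_1,\dots,V_r$. Suppose that $(V_{\eta_1},\dots,V_{\eta_r})$, for some $\eta\in\mathfrak{S}_r$, is a color perfect elimination ordering. Write $n_i=|V_{\eta_i}|$, $N_i=\sum_{k\in[i]}n_k$, $N_0=0$, and relabel the vertices so that $V_{\eta_i}=\{N_{i-1}+1,\dots,N_i\}$ for each $i\in[r]$; define $\mathcal{Z}_G^{\mathcal{C}}$ with respect to this vertex numbering, and consider block decompositions with respect to the partition $(n_1,\dots,n_r)$ of $p=|V|$. (i) If $(G,\mathcal{C})$ is CER with respect to the ordering $(V_{\eta_1},\dots,V_{\eta_r})$, then $\mathcal{Z}_G^{\mathcal{C}}$ is a BC-space. (ii) If $(G,\mathcal{C})$ is symmetric CER with respect to the ordering $(V_{\eta_1},\dots,V_{\eta_r})$, then $\mathcal{Z}_G^{\mathcal{C}}$ is a cBC-space.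
   Context: Colored graphs: $G=(V,E)$ is a finite simple undirected graph, $V=[p]$. A coloring $\mathcal{C}$ of $G$ consists of a partition of $V$ into nonempty vertex color classes $V_1,\dots,V_r$ and a partition of $E$ into edge color classes $E_{r+1},\dots,E_{r+R}$. The extended edge set is $\tilde E=E\cup\{\{v\}:v\in V\}$; put $E_i=\{\{v\}:v\in V_i\}$ for $i\in[r]$, so $\{E_1,\dots,E_{r+R}\}$ partitions $\tilde E$. Define $c(v,w)=k$ iff $\{v,w\}\in E_k$ (for $\{v,w\}\in\tilde E$), $c(v):=c(v,v)$ (so $c(v)=i$ iff $v\in V_i$), and $c(v,w)=0$ if $v\ne w$ and $\{v,w\}\notin E$. Orderings: for an ordered partition $(V_{\eta_1},\dots,V_{\eta_r})$, $\eta\in\mathfrak{S}_r$, let $\pi(v)=i$ iff $v\in V_{\eta_i}$ and $V_{\le i}=V_{\eta_1}\cup\dots\cup V_{\eta_i}$. It is a color perfect elimination ordering (cpeo) if for every $i\in[r]$ every $v\in V_{\eta_i}$ is simplicial (its neighbours form a clique) in the induced subgraph $G[V_{\eta_i}\cup\dots\cup V_{\eta_r}]$. For $\{v,w\}\in\tilde E$ and $k,h\in[r+R]$ set $m_{v\to w}(k,h)=|\{u\in V_{\le \min(\pi(v),\pi(w))}: c(v,u)=k,\ c(u,w)=h\}|$ and $m_{v\leftrightarrow w}(k,h)=m_{v\to w}(k,h)+m_{v\to w}(h,k)$. Let $F_i=\{c(v,w):\{v,w\}\in\tilde E,\ c(v)=c(w)=i\}$ and $F=\bigcup_{i}F_i$.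 (M1): for all $\{v,w\},\{v',w'\}\in\tilde E$, $c(v,w)=c(v',w')$ implies $m_{v\leftrightarrow w}=m_{v'\leftrightarrow w'}$ (as functions on $[r+R]^2$). (M2): for all $v,w\in V$ with $c(v)=c(w)$, $m_{v\to w}(k,h)=m_{w\to v}(k,h)$ for all $k,h\in F$. $(G,\mathcal{C})$ is CER with respect to an ordering if the ordering is a cpeo and (M1) holds for it; symmetric CER if in addition (M2) holds for it. Matrix spaces: $\mathcal{Z}_G=\{x\in\mathrm{Sym}(p): x_{ij}=0$ whenever $i\ne j$ and $\{i,j\}\notin E\}$ and $\mathcal{Z}_G^{\mathcal{C}}=\{x\in\mathcal{Z}_G: x_{ij}=x_{kl}$ whenever $\{i,j\},\{k,l\}\in\tilde E$ and $c(i,j)=c(k,l)\}$. BC-spaces: given an ordered partition $(n_1,\dots,n_r)$ of $p$, write $x\in\mathrm{Sym}(p)$ in blocks $X_{kh}\in\mathbb{R}^{n_k\times n_h}$. $\mathrm{BlockTri}(x)$ keeps the blocks $X_{kh}$ with $k\ge h$ and sets the others to zero; $\mathrm{BlockDiag}(x)$ keeps only the blocks $X_{kk}$. For a linear subspace $\mathcal{Z}\subset\mathrm{Sym}(p)$: $M_i(\mathcal{Z})=\{x\in\mathcal{Z}: X_{kh}=0$ unless $(k,h)=(i,i)\}$, $L_i(\mathcal{Z})=\{x\in\mathcal{Z}: X_{kh}=0$ unless $k>h=i$ or $h>k=i\}$. $\mathcal{Z}$ is a BC-space if (Z0) $I_p\in\mathcal{Z}$ and $\mathcal{Z}=(\bigoplus_{i\in[r]}M_i(\mathcal{Z}))\oplus(\bigoplus_{i\in[r-1]}L_i(\mathcal{Z}))$,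 and (Z1) $\mathrm{BlockTri}(x)\mathrm{BlockTri}(x)^\top\in\mathcal{Z}$ for all $x\in\mathcal{Z}$. It is a cBC-space if moreover (Z2) $\mathrm{BlockDiag}(x)\mathrm{BlockDiag}(y)\in\mathcal{Z}$ for all $x,y\in\mathcal{Z}$. *)

theory Defs
  imports Complex_Main "HOL-Library.Function_Algebras"
begin

text \<open>The vertex set is {0..<p} (the paper's [p], shifted by one);
 a p x p real matrix is a function nat => nat => real vanishing outside {0..<p}^2,
 and matrix index a corresponds to vertex a.
 The colouring is a function col on extended edges: col {v} is the vertex colour
 (in {1..r}), col {v,w} the edge colour (in {r+1..r+R}).\<close>

type_synonym rmat = "nat \<Rightarrow> nat \<Rightarrow> real"

definition simple_graph :: "nat \<Rightarrow> nat set set \<Rightarrow> bool" where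
  "simple_graph p E \<longleftrightarrow> (\<forall>e\<in>E. \<exists>v w. v < p \<and> w < p \<and> v \<noteq> w \<and> e = {v, w})"

definition is_coloring :: "nat \<Rightarrow> nat set set \<Rightarrow> nat \<Rightarrow> nat \<Rightarrow> (nat set \<Rightarrow> nat) \<Rightarrow> bool" where
  "is_coloring p E r R col \<longleftrightarrow>
     (\<forall>v<p. col {v} \<in> {1..r}) \<and> (\<forall>i\<in>{1..r}. \<exists>v<p. col {v} = i) \<and>
     (\<forall>e\<in>E. col e \<in> {r+1..r+R}) \<and> (\<forall>k\<in>{r+1..r+R}. \<exists>e\<in>E. col e = k)"

definition ext_edge :: "nat set set \<Rightarrow> nat \<Rightarrow> nat \<Rightarrow> bool" where
  "ext_edge E v w \<longleftrightarrow> v = w \<or> {v, w} \<in> E"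

definition cc :: "nat set set \<Rightarrow> (nat set \<Rightarrow> nat) \<Rightarrow> nat \<Rightarrow> nat \<Rightarrow> nat" where
  "cc E col v w = (if v = w then col {v} else if {v, w} \<in> E then col {v, w} else 0)"

definition pos :: "nat \<Rightarrow> (nat \<Rightarrow> nat) \<Rightarrow> (nat set \<Rightarrow> nat) \<Rightarrow> nat \<Rightarrow> nat" where
  "pos r \<eta> col v = (THE i. i \<in> {1..r} \<and> \<eta> i = col {v})"

definition cpeo :: "nat \<Rightarrow> nat set set \<Rightarrow> nat \<Rightarrow> (nat set \<Rightarrow> nat) \<Rightarrow> (nat \<Rightarrow> nat) \<Rightarrow> bool" where
  "cpeo p E r col \<eta> \<longleftrightarrow>
     (\<forall>i\<in>{1..r}. \<forall>v<p. pos r \<eta> col v = i \<longrightarrow>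
        (\<forall>u<p. \<forall>w<p. i \<le> pos r \<eta> col u \<and> i \<le> pos r \<eta> col w \<and> u \<noteq> w \<and>
            {v, u} \<in> E \<and> {v, w} \<in> E \<longrightarrow> {u, w} \<in> E))"

definition mto :: "nat \<Rightarrow> nat set set \<Rightarrow> nat \<Rightarrow> (nat set \<Rightarrow> nat) \<Rightarrow> (nat \<Rightarrow> nat)
                    \<Rightarrow> nat \<Rightarrow> nat \<Rightarrow> nat \<Rightarrow> nat \<Rightarrow> nat" where
  "mto p E r col \<eta> v w k h =
     card {u. u < p \<and> pos r \<eta> col u \<le> min (pos r \<eta> col v) (pos r \<eta> col w)
              \<and> cc E col v u = k \<and> cc E col u w = h}"

definition mboth :: "nat \<Rightarrow> nat set set \<Rightarrow> nat \<Rightarrow> (nat set \<Rightarrow> nat) \<Rightarrow> (nat \<Rightarrow> nat)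
                    \<Rightarrow> nat \<Rightarrow> nat \<Rightarrow> nat \<Rightarrow> nat \<Rightarrow> nat" where
  "mboth p E r col \<eta> v w k h = mto p E r col \<eta> v w k h + mto p E r col \<eta> v w h k"

definition cond_M1 :: "nat \<Rightarrow> nat set set \<Rightarrow> nat \<Rightarrow> nat \<Rightarrow> (nat set \<Rightarrow> nat) \<Rightarrow> (nat \<Rightarrow> nat) \<Rightarrow> bool" where
  "cond_M1 p E r R col \<eta> \<longleftrightarrow>
     (\<forall>v<p. \<forall>w<p. \<forall>v'<p. \<forall>w'<p.
        ext_edge E v w \<and> ext_edge E v' w' \<and> cc E col v w = cc E col v' w' \<longrightarrow>
        (\<forall>k\<in>{1..r+R}. \<forall>h\<in>{1..r+R}. mboth p E r col \<eta> v w k h = mboth p E r col \<eta> v' w' k h))"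

definition Fset :: "nat \<Rightarrow> nat set set \<Rightarrow> nat \<Rightarrow> (nat set \<Rightarrow> nat) \<Rightarrow> nat set" where
  "Fset p E r col = {cc E col v w | v w. v < p \<and> w < p \<and> ext_edge E v w \<and>
                        (\<exists>i\<in>{1..r}. col {v} = i \<and> col {w} = i)}"

definition cond_M2 :: "nat \<Rightarrow> nat set set \<Rightarrow> nat \<Rightarrow> (nat set \<Rightarrow> nat) \<Rightarrow> (nat \<Rightarrow> nat) \<Rightarrow> bool" where
  "cond_M2 p E r col \<eta> \<longleftrightarrow>
     (\<forall>v<p. \<forall>w<p. col {v} = col {w} \<longrightarrow>
        (\<forall>k\<in>Fset p E r col. \<forall>h\<in>Fset p E r col. mto p E r col \<eta> v w k h = mto p E r col \<eta> w v k h))"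

definition CER :: "nat \<Rightarrow> nat set set \<Rightarrow> nat \<Rightarrow> nat \<Rightarrow> (nat set \<Rightarrow> nat) \<Rightarrow> (nat \<Rightarrow> nat) \<Rightarrow> bool" where
  "CER p E r R col \<eta> \<longleftrightarrow> cpeo p E r col \<eta> \<and> cond_M1 p E r R col \<eta>"

definition symCER :: "nat \<Rightarrow> nat set set \<Rightarrow> nat \<Rightarrow> nat \<Rightarrow> (nat set \<Rightarrow> nat) \<Rightarrow> (nat \<Rightarrow> nat) \<Rightarrow> bool" where
  "symCER p E r R col \<eta> \<longleftrightarrow> CER p E r R col \<eta> \<and> cond_M2 p E r col \<eta>"

definition Sym :: "nat \<Rightarrow> rmat set" where
  "Sym p = {x. (\<forall>i j. x i j = x j i) \<and> (\<forall>i j. (p \<le> i \<or> p \<le> j) \<longrightarrow> x i j = 0)}"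

definition idm :: "nat \<Rightarrow> rmat" where
  "idm p = (\<lambda>i j. if i = j \<and> i < p then 1 else 0)"

definition mmul :: "nat \<Rightarrow> rmat \<Rightarrow> rmat \<Rightarrow> rmat" where
  "mmul p x y = (\<lambda>i j. \<Sum>k<p. x i k * y k j)"

definition mtrans :: "rmat \<Rightarrow> rmat" where
  "mtrans x = (\<lambda>i j. x j i)"

definition linear_subspace :: "nat \<Rightarrow> rmat set \<Rightarrow> bool" where
  "linear_subspace p Z \<longleftrightarrow> Z \<subseteq> Sym p \<and> 0 \<in> Z \<and> (\<forall>x\<in>Z. \<forall>y\<in>Z. x + y \<in> Z) \<and>
     (\<forall>c::real. \<forall>x\<in>Z. (\<lambda>i j. c * x i j) \<in> Z)"

definition Z_G_C :: "nat \<Rightarrow> nat set set \<Rightarrow> (nat set \<Rightarrow> nat) \<Rightarrow> rmat set" where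
  "Z_G_C p E col = {x \<in> Sym p.
      (\<forall>i<p. \<forall>j<p. i \<noteq> j \<and> {i, j} \<notin> E \<longrightarrow> x i j = 0) \<and>
      (\<forall>i<p. \<forall>j<p. \<forall>k<p. \<forall>l<p. ext_edge E i j \<and> ext_edge E k l \<and> cc E col i j = cc E col k l
          \<longrightarrow> x i j = x k l)}"

definition cumN :: "(nat \<Rightarrow> nat) \<Rightarrow> nat \<Rightarrow> nat" where
  "cumN ns i = (\<Sum>k\<in>{1..i}. ns k)"

definition blk :: "(nat \<Rightarrow> nat) \<Rightarrow> nat \<Rightarrow> nat" where
  "blk ns a = (LEAST i. a < cumN ns i)"

definition ordered_partition :: "nat \<Rightarrow> nat \<Rightarrow> (nat \<Rightarrow> nat) \<Rightarrow> bool" where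
  "ordered_partition p r ns \<longleftrightarrow> (\<forall>i\<in>{1..r}. 0 < ns i) \<and> cumN ns r = p"

definition BlockTri :: "(nat \<Rightarrow> nat) \<Rightarrow> rmat \<Rightarrow> rmat" where
  "BlockTri ns x = (\<lambda>a b. if blk ns b \<le> blk ns a then x a b else 0)"

definition BlockDiag :: "(nat \<Rightarrow> nat) \<Rightarrow> rmat \<Rightarrow> rmat" where
  "BlockDiag ns x = (\<lambda>a b. if blk ns a = blk ns b then x a b else 0)"

definition Mblk :: "nat \<Rightarrow> (nat \<Rightarrow> nat) \<Rightarrow> rmat set \<Rightarrow> nat \<Rightarrow> rmat set" where
  "Mblk p ns Z i = {x \<in> Z. \<forall>a<p. \<forall>b<p. \<not> (blk ns a = i \<and> blk ns b = i) \<longrightarrow> x a b = 0}"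

definition Lblk :: "nat \<Rightarrow> (nat \<Rightarrow> nat) \<Rightarrow> rmat set \<Rightarrow> nat \<Rightarrow> rmat set" where
  "Lblk p ns Z i = {x \<in> Z. \<forall>a<p. \<forall>b<p.
      \<not> ((blk ns a > blk ns b \<and> blk ns b = i) \<or> (blk ns b > blk ns a \<and> blk ns a = i)) \<longrightarrow> x a b = 0}"

definition block_direct_sum :: "nat \<Rightarrow> nat \<Rightarrow> (nat \<Rightarrow> nat) \<Rightarrow> rmat set \<Rightarrow> bool" where
  "block_direct_sum p r ns Z \<longleftrightarrow>
     Z = {(\<Sum>i\<in>{1..r}. m i) + (\<Sum>i\<in>{1..r-1}. l i) | m l.
            (\<forall>i\<in>{1..r}. m i \<in> Mblk p ns Z i) \<and> (\<forall>i\<in>{1..r-1}. l i \<in> Lblk p ns Z i)} \<and>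
     (\<forall>m l. (\<forall>i\<in>{1..r}. m i \<in> Mblk p ns Z i) \<and> (\<forall>i\<in>{1..r-1}. l i \<in> Lblk p ns Z i) \<and>
            (\<Sum>i\<in>{1..r}. m i) + (\<Sum>i\<in>{1..r-1}. l i) = 0
        \<longrightarrow> (\<forall>i\<in>{1..r}. m i = 0) \<and> (\<forall>i\<in>{1..r-1}. l i = 0))"

definition BC_space :: "nat \<Rightarrow> nat \<Rightarrow> (nat \<Rightarrow> nat) \<Rightarrow> rmat set \<Rightarrow> bool" where
  "BC_space p r ns Z \<longleftrightarrow> linear_subspace p Z \<and>
     idm p \<in> Z \<and> block_direct_sum p r ns Z \<and>
     (\<forall>x\<in>Z. mmul p (BlockTri ns x) (mtrans (BlockTri ns x)) \<in> Z)"

definition cBC_space :: "nat \<Rightarrow> nat \<Rightarrow> (nat \<Rightarrow> nat) \<Rightarrow> rmat set \<Rightarrow> bool" where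
  "cBC_space p r ns Z \<longleftrightarrow> BC_space p r ns Z \<and>
     (\<forall>x\<in>Z. \<forall>y\<in>Z. mmul p (BlockDiag ns x) (BlockDiag ns y) \<in> Z)"

end

theory Submission
  imports Defs
begin

lemma fun_sum_apply2: "(\<Sum>i\<in>I. f i) a b = (\<Sum>i\<in>I. (f i a b :: real))"
  by (induction I rule: infinite_finite_induct) auto

lemma fiber_sum:
  fixes f :: "nat \<Rightarrow> nat \<Rightarrow> real"
  assumes "finite U" "finite K" "\<forall>u\<in>U. g1 u \<in> K \<and> g2 u \<in> K"
  shows "(\<Sum>u\<in>U. f (g1 u) (g2 u)) = (\<Sum>k\<in>K. \<Sum>h\<in>K. f k h * real (card {u\<in>U. g1 u = k \<and> g2 u = h}))"
proof -
  have "(\<Sum>u\<in>U. f (g1 u) (g2 u)) = (\<Sum>u\<in>U. \<Sum>k\<in>K. \<Sum>h\<in>K. if g1 u = k \<and> g2 u = h then f k h else 0)"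
  proof (rule sum.cong)
    fix u assume u: "u \<in> U"
    have "(\<Sum>k\<in>K. \<Sum>h\<in>K. if g1 u = k \<and> g2 u = h then f k h else 0)
        = (\<Sum>k\<in>K. if g1 u = k then f k (g2 u) else 0)"
      using assms(2,3) u by (intro sum.cong) auto
    also have "\<dots> = f (g1 u) (g2 u)" using assms(2,3) u by simp
    finally show "f (g1 u) (g2 u) = (\<Sum>k\<in>K. \<Sum>h\<in>K. if g1 u = k \<and> g2 u = h then f k h else 0)" by simp
  qed simp
  also have "\<dots> = (\<Sum>k\<in>K. \<Sum>u\<in>U. \<Sum>h\<in>K. if g1 u = k \<and> g2 u = h then f k h else 0)"
    by (rule sum.swap)
  also have "\<dots> = (\<Sum>k\<in>K. \<Sum>h\<in>K. \<Sum>u\<in>U. if g1 u = k \<and> g2 u = h then f k h else 0)"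
    by (intro sum.cong refl sum.swap)
  also have "\<dots> = (\<Sum>k\<in>K. \<Sum>h\<in>K. f k h * real (card {u\<in>U. g1 u = k \<and> g2 u = h}))"
  proof (intro sum.cong refl)
    fix k h
    have "(\<Sum>u\<in>U. if g1 u = k \<and> g2 u = h then f k h else 0) = (\<Sum>u\<in>{u\<in>U. g1 u = k \<and> g2 u = h}. f k h)"
      using assms(1) by (simp add: sum.inter_filter[symmetric])
    then show "(\<Sum>u\<in>U. if g1 u = k \<and> g2 u = h then f k h else 0) = f k h * real (card {u\<in>U. g1 u = k \<and> g2 u = h})"
      by simp
  qed
  finally show ?thesis .
qed


locale S =
  fixes p r R :: nat and E :: "nat set set" and col :: "nat set \<Rightarrow> nat"
    and \<eta> :: "nat \<Rightarrow> nat" and ns :: "nat \<Rightarrow> nat"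
  assumes graph: "simple_graph p E"
    and coloring: "is_coloring p E r R col"
    and eta: "bij_betw \<eta> {1..r} {1..r}"
    and cpeo: "cpeo p E r col \<eta>"
    and numbering: "\<forall>i\<in>{1..r}. {v. v < p \<and> col {v} = \<eta> i} = {cumN ns (i - 1) ..< cumN ns i}"
begin

abbreviation "\<pi> v \<equiv> pos r \<eta> col v"
abbreviation "c v w \<equiv> cc E col v w"
abbreviation "Z \<equiv> Z_G_C p E col"

lemma col_v: "v < p \<Longrightarrow> col {v} \<in> {1..r}"
  using coloring unfolding is_coloring_def by simp

lemma edge: "{v, w} \<in> E \<Longrightarrow> v \<noteq> w \<and> v < p \<and> w < p \<and> col {v, w} \<in> {r+1..r+R}"
proof -
  assume e: "{v, w} \<in> E"
  then obtain a b where "a < p" "b < p" "a \<noteq> b" "{v, w} = {a, b}"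
    using graph unfolding simple_graph_def by blast
  then have "v \<noteq> w \<and> v < p \<and> w < p" by (auto simp: doubleton_eq_iff)
  moreover have "col {v, w} \<in> {r+1..r+R}" using e coloring unfolding is_coloring_def by simp
  ultimately show ?thesis by blast
qed

lemma cc_sym: "c v w = c w v"
  unfolding cc_def by (auto simp: insert_commute)

lemma cc_small: "v < p \<Longrightarrow> c v w \<noteq> 0 \<Longrightarrow> c v w \<le> r \<Longrightarrow> v = w"
  unfolding cc_def using edge[of v w] by (auto split: if_splits)

lemma cc_range: "v < p \<Longrightarrow> c v w \<le> r + R"
  unfolding cc_def using edge[of v w] col_v[of v] by (auto split: if_splits)

lemma cc_ext: "v < p \<Longrightarrow> ext_edge E v w \<Longrightarrow> 1 \<le> c v w"
  unfolding cc_def ext_edge_def using edge[of v w] col_v[of v] by (auto split: if_splits)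

lemma cc_nonext: "\<not> ext_edge E v w \<Longrightarrow> c v w = 0"
  unfolding cc_def ext_edge_def by auto

lemma cc_vv: "c v v = col {v}"
  unfolding cc_def by auto

lemma cc_edge: "v \<noteq> w \<Longrightarrow> ext_edge E v w \<Longrightarrow> r + 1 \<le> c v w"
  unfolding cc_def ext_edge_def using edge[of v w] by auto

lemma pos_eq: "i \<in> {1..r} \<Longrightarrow> col {v} = \<eta> i \<Longrightarrow> \<pi> v = i"
  unfolding pos_def
proof (rule the_equality)
  assume "i \<in> {1..r}" "col {v} = \<eta> i"
  then show "i \<in> {1..r} \<and> \<eta> i = col {v}" by simp
next
  fix j assume a: "i \<in> {1..r}" "col {v} = \<eta> i" and j: "j \<in> {1..r} \<and> \<eta> j = col {v}"
  have "inj_on \<eta> {1..r}" using eta by (simp add: bij_betw_def)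
  then show "j = i" using a j by (metis inj_onD)
qed

lemma pos_v: "v < p \<Longrightarrow> \<pi> v \<in> {1..r} \<and> \<eta> (\<pi> v) = col {v}"
proof -
  assume v: "v < p"
  then obtain i where i: "i \<in> {1..r}" "\<eta> i = col {v}"
    using col_v[OF v] bij_betw_imp_surj_on[OF eta] by (metis imageE)
  then show ?thesis using pos_eq[of i v] by auto
qed

lemma pos_iff: "v < p \<Longrightarrow> w < p \<Longrightarrow> \<pi> v = \<pi> w \<longleftrightarrow> col {v} = col {w}"
  proof
  assume "v < p" "w < p" "\<pi> v = \<pi> w"
  then show "col {v} = col {w}" using pos_v[of v] pos_v[of w] by metis
next
  assume "v < p" "w < p" "col {v} = col {w}"
  then show "\<pi> v = \<pi> w" using pos_v[of v] pos_eq[of "\<pi> v" w] by metis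
qed

lemma cumN_mono: "i \<le> j \<Longrightarrow> cumN ns i \<le> cumN ns j"
  unfolding cumN_def by (rule sum_mono2) auto

lemma blk_pos: "v < p \<Longrightarrow> blk ns v = \<pi> v"
proof -
  assume v: "v < p"
  let ?i = "\<pi> v"
  have i: "?i \<in> {1..r}" "\<eta> ?i = col {v}" using pos_v[OF v] by auto
  have "v \<in> {v. v < p \<and> col {v} = \<eta> ?i}" using i v by simp
  then have "v \<in> {cumN ns (?i - 1) ..< cumN ns ?i}" using numbering i(1) by blast
  then have lo: "cumN ns (?i - 1) \<le> v" and hi: "v < cumN ns ?i" by auto
  show ?thesis unfolding blk_def
  proof (rule Least_equality)
    show "v < cumN ns ?i" by (rule hi)
  next
    fix j assume "v < cumN ns j"
    moreover have "j \<le> ?i - 1 \<Longrightarrow> cumN ns j \<le> v" using cumN_mono[of j "?i - 1"] lo by simp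
    ultimately show "?i \<le> j" by (cases "j \<le> ?i - 1") auto
  qed
qed

end

definition gg :: "nat \<Rightarrow> nat \<Rightarrow> nat \<Rightarrow> nat" where
  "gg A B x = (if A \<le> B \<and> A = x then 1 else 0) + (if B \<le> A \<and> B = x then 1 else 0)"
lemma gg_min: "gg A B (min A B) = (if A = B then 2 else 1)"
  unfolding gg_def min_def by auto
lemma gg_other: "x \<noteq> min A B \<Longrightarrow> gg A B x = 0"
  unfolding gg_def min_def by auto
lemma min_aux:
  assumes "gg A B j = gg A' B' j" and "j = min A B"
  shows "(A = B \<longleftrightarrow> A' = B') \<and> j = min A' B'"
proof -
  have "gg A B j \<noteq> 0" using assms(2) gg_min[of A B] by simp
  then have j: "j = min A' B'" using assms(1) gg_other[of j A' B'] by auto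
  have "(if A = B then 2 else 1) = (if A' = B' then 2 else (1::nat))"
    using assms gg_min[of A B] gg_min[of A' B'] j by simp
  then show ?thesis using j by (auto split: if_splits)
qed

context S begin

lemma Z_sym: "x \<in> Z \<Longrightarrow> x a b = x b a"
  unfolding Z_G_C_def Sym_def by blast

lemma Z_out: "x \<in> Z \<Longrightarrow> p \<le> a \<or> p \<le> b \<Longrightarrow> x a b = 0"
  unfolding Z_G_C_def Sym_def by blast

lemma Z_pat: "x \<in> Z \<Longrightarrow> a < p \<Longrightarrow> b < p \<Longrightarrow> a \<noteq> b \<Longrightarrow> {a, b} \<notin> E \<Longrightarrow> x a b = 0"
  unfolding Z_G_C_def by blast

lemma Z_const: "x \<in> Z \<Longrightarrow> a < p \<Longrightarrow> b < p \<Longrightarrow> a' < p \<Longrightarrow> b' < p \<Longrightarrow>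
   ext_edge E a b \<Longrightarrow> ext_edge E a' b' \<Longrightarrow> c a b = c a' b' \<Longrightarrow> x a b = x a' b'"
  unfolding Z_G_C_def by blast

definition Pq :: "nat \<Rightarrow> nat \<times> nat \<Rightarrow> bool" where
  "Pq k q \<longleftrightarrow> fst q < p \<and> snd q < p \<and> ext_edge E (fst q) (snd q) \<and> c (fst q) (snd q) = k"

definition coef :: "rmat \<Rightarrow> nat \<Rightarrow> real" where
  "coef x k = (if \<exists>q. Pq k q then x (fst (SOME q. Pq k q)) (snd (SOME q. Pq k q)) else 0)"

lemma coef0: "coef x 0 = 0"
proof -
  have "\<not> Pq 0 q" for q using cc_ext[of "fst q" "snd q"] unfolding Pq_def by auto
  then show ?thesis unfolding coef_def by auto
qed

lemma coef_eq: assumes x: "x \<in> Z" and ab: "a < p" "b < p" shows "x a b = coef x (c a b)"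
proof (cases "ext_edge E a b")
  case True
  then have ex: "\<exists>q. Pq (c a b) q" using ab unfolding Pq_def by (intro exI[of _ "(a, b)"]) simp
  let ?q = "SOME q. Pq (c a b) q"
  have q: "Pq (c a b) ?q" using someI_ex[OF ex] .
  have "x a b = x (fst ?q) (snd ?q)"
    by (rule Z_const[OF x ab]) (use q True in \<open>simp_all add: Pq_def\<close>)
  then show ?thesis unfolding coef_def using ex by simp
next
  case False
  then have "c a b = 0" by (rule cc_nonext)
  moreover have "x a b = 0" using False Z_pat[OF x ab] unfolding ext_edge_def by blast
  ultimately show ?thesis by (simp add: coef0)
qed

lemma mto_vert1:
  assumes a: "a \<in> {1..r}" and v: "v < p"
  shows "mto p E r col \<eta> v w a k = (if \<pi> v \<le> \<pi> w \<and> col {v} = a \<and> c v w = k then 1 else 0)"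
proof -
  have "{u. u < p \<and> \<pi> u \<le> min (\<pi> v) (\<pi> w) \<and> c v u = a \<and> c u w = k}
      = (if \<pi> v \<le> \<pi> w \<and> col {v} = a \<and> c v w = k then {v} else {})"
  proof -
    have h: "c v u = a \<Longrightarrow> u = v" for u using cc_small[OF v, of u] a by simp
    show ?thesis
    proof (rule set_eqI, rule iffI)
      fix u assume "u \<in> {u. u < p \<and> \<pi> u \<le> min (\<pi> v) (\<pi> w) \<and> c v u = a \<and> c u w = k}"
      then have u: "u < p" "\<pi> u \<le> min (\<pi> v) (\<pi> w)" "c v u = a" "c u w = k" by auto
      then have "u = v" using h by blast
      then show "u \<in> (if \<pi> v \<le> \<pi> w \<and> col {v} = a \<and> c v w = k then {v} else {})"
        using u by (auto simp: cc_vv)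
    next
      fix u assume "u \<in> (if \<pi> v \<le> \<pi> w \<and> col {v} = a \<and> c v w = k then {v} else {})"
      then show "u \<in> {u. u < p \<and> \<pi> u \<le> min (\<pi> v) (\<pi> w) \<and> c v u = a \<and> c u w = k}"
        using v by (auto simp: cc_vv split: if_splits)
    qed
  qed
  then show ?thesis unfolding mto_def by simp
qed

lemma mto_vert2:
  assumes a: "a \<in> {1..r}" and w: "w < p"
  shows "mto p E r col \<eta> v w k a = (if \<pi> w \<le> \<pi> v \<and> col {w} = a \<and> c v w = k then 1 else 0)"
proof -
  have "{u. u < p \<and> \<pi> u \<le> min (\<pi> v) (\<pi> w) \<and> c v u = k \<and> c u w = a}
      = (if \<pi> w \<le> \<pi> v \<and> col {w} = a \<and> c v w = k then {w} else {})"
  proof -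
    have h: "u < p \<Longrightarrow> c u w = a \<Longrightarrow> u = w" for u using cc_small[of u w] a by simp
    show ?thesis
    proof (rule set_eqI, rule iffI)
      fix u assume "u \<in> {u. u < p \<and> \<pi> u \<le> min (\<pi> v) (\<pi> w) \<and> c v u = k \<and> c u w = a}"
      then have u: "u < p" "\<pi> u \<le> min (\<pi> v) (\<pi> w)" "c v u = k" "c u w = a" by auto
      then have "u = w" using h by blast
      then show "u \<in> (if \<pi> w \<le> \<pi> v \<and> col {w} = a \<and> c v w = k then {w} else {})"
        using u by (auto simp: cc_vv)
    next
      fix u assume "u \<in> (if \<pi> w \<le> \<pi> v \<and> col {w} = a \<and> c v w = k then {w} else {})"
      then show "u \<in> {u. u < p \<and> \<pi> u \<le> min (\<pi> v) (\<pi> w) \<and> c v u = k \<and> c u w = a}"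
        using w by (auto simp: cc_vv split: if_splits)
    qed
  qed
  then show ?thesis unfolding mto_def by simp
qed

lemma mboth_vert:
  assumes i: "i \<in> {1..r}" and v: "v < p" and w: "w < p"
  shows "mboth p E r col \<eta> v w (\<eta> i) (c v w) = gg (\<pi> v) (\<pi> w) i"
proof -
  have ei: "\<eta> i \<in> {1..r}" using i eta by (auto simp: bij_betw_def)
  have "col {v} = \<eta> i \<longleftrightarrow> \<pi> v = i" using pos_v[OF v] pos_eq[OF i, of v] by metis
  moreover have "col {w} = \<eta> i \<longleftrightarrow> \<pi> w = i" using pos_v[OF w] pos_eq[OF i, of w] by metis
  ultimately show ?thesis unfolding mboth_def
    using mto_vert1[OF ei v, of w "c v w"] mto_vert2[OF ei w, of v "c v w"] by (simp add: gg_def)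
qed

lemma block_inv:
  assumes M1: "cond_M1 p E r R col \<eta>"
    and ab: "a < p" "b < p" and cd: "a' < p" "b' < p"
    and e1: "ext_edge E a b" and e2: "ext_edge E a' b'" and eq: "c a b = c a' b'"
  shows "(\<pi> a = \<pi> b \<longleftrightarrow> \<pi> a' = \<pi> b') \<and> min (\<pi> a) (\<pi> b) = min (\<pi> a') (\<pi> b')"
proof (cases "a = b")
  case True
  then have "c a' b' = col {a}" using eq by (simp add: cc_vv)
  moreover have "col {a} \<in> {1..r}" using col_v ab by blast
  ultimately have "a' = b'" using cc_small[OF cd(1), of b'] by simp
  then have "col {a} = col {a'}" using eq True by (simp add: cc_vv)
  then show ?thesis using True \<open>a' = b'\<close> pos_iff ab cd by simp
next
  case False
  have a'b': "a' \<noteq> b'"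
  proof
    assume "a' = b'"
    then have "c a b = col {a'}" using eq by (simp add: cc_vv)
    moreover have "col {a'} \<in> {1..r}" using col_v cd by blast
    moreover have "r + 1 \<le> c a b" using cc_edge[OF False e1] .
    ultimately show False by simp
  qed
  let ?k = "c a b"
  have k: "?k \<in> {1..r+R}" using cc_ext[OF ab(1) e1] cc_range[OF ab(1)] by simp
  have key: "\<And>i. i \<in> {1..r} \<Longrightarrow> gg (\<pi> a) (\<pi> b) i = gg (\<pi> a') (\<pi> b') i"
  proof -
    fix i assume i: "i \<in> {1..r}"
    have "\<eta> i \<in> {1..r}" using i eta by (auto simp: bij_betw_def)
    then have ei: "\<eta> i \<in> {1..r+R}" by simp
    have "mboth p E r col \<eta> a b (\<eta> i) ?k = mboth p E r col \<eta> a' b' (\<eta> i) ?k"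
      apply (rule M1[unfolded cond_M1_def, rule_format, OF ab cd])
      using e1 e2 eq ei k by auto
    then show "?thesis i" using mboth_vert[OF i ab] mboth_vert[OF i cd] eq by simp
  qed
  have j: "min (\<pi> a) (\<pi> b) \<in> {1..r}" using pos_v ab by (simp add: min_def)
  show ?thesis using min_aux[OF key[OF j] refl] by simp
qed

end

context S begin

lemma Z_intro:
  assumes "\<And>i j. x i j = x j i" and "\<And>i j. p \<le> i \<or> p \<le> j \<Longrightarrow> x i j = 0"
    and "\<And>i j. i < p \<Longrightarrow> j < p \<Longrightarrow> i \<noteq> j \<Longrightarrow> {i, j} \<notin> E \<Longrightarrow> x i j = 0"
    and "\<And>a b a' b'. a < p \<Longrightarrow> b < p \<Longrightarrow> a' < p \<Longrightarrow> b' < p \<Longrightarrow> ext_edge E a b \<Longrightarrow>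
          ext_edge E a' b' \<Longrightarrow> c a b = c a' b' \<Longrightarrow> x a b = x a' b'"
  shows "x \<in> Z"
  unfolding Z_G_C_def Sym_def mem_Collect_eq
  apply (intro conjI allI impI)
  apply (rule assms(1))
  apply (rule assms(2), assumption)
  apply (rule assms(3); simp)
  apply (rule assms(4); simp)
  done

lemma Z_zero: "0 \<in> Z"
  by (rule Z_intro) auto

lemma Z_add: "x \<in> Z \<Longrightarrow> y \<in> Z \<Longrightarrow> x + y \<in> Z"
proof (rule Z_intro)
  fix a b a' b' assume x: "x \<in> Z" and y: "y \<in> Z" and h: "a < p" "b < p" "a' < p" "b' < p"
    "ext_edge E a b" "ext_edge E a' b'" "c a b = c a' b'"
  show "(x + y) a b = (x + y) a' b'" using Z_const[OF x h] Z_const[OF y h] by simp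
next
  fix i j assume x: "x \<in> Z" and y: "y \<in> Z"
  show "(x + y) i j = (x + y) j i" unfolding plus_fun_apply using Z_sym[OF x, of i j] Z_sym[OF y, of i j] by linarith
next
  fix i j assume x: "x \<in> Z" and y: "y \<in> Z" and "p \<le> i \<or> p \<le> j"
  then show "(x + y) i j = 0" using Z_out[OF x] Z_out[OF y] by simp
next
  fix i j assume x: "x \<in> Z" and y: "y \<in> Z" and "i < p" "j < p" "i \<noteq> j" "{i, j} \<notin> E"
  then show "(x + y) i j = 0" using Z_pat[OF x] Z_pat[OF y] by simp
qed

lemma Z_scale: "x \<in> Z \<Longrightarrow> (\<lambda>i j. t * x i j) \<in> Z"
proof (rule Z_intro)
  fix a b a' b' assume x: "x \<in> Z" and h: "a < p" "b < p" "a' < p" "b' < p"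
    "ext_edge E a b" "ext_edge E a' b'" "c a b = c a' b'"
  show "t * x a b = t * x a' b'" using Z_const[OF x h] by simp
next
  fix i j assume x: "x \<in> Z"
  show "t * x i j = t * x j i" using Z_sym[OF x, of i j] by (rule arg_cong)
next
  fix i j assume x: "x \<in> Z" and "p \<le> i \<or> p \<le> j"
  then show "t * x i j = 0" using Z_out[OF x] by simp
next
  fix i j assume x: "x \<in> Z" and "i < p" "j < p" "i \<noteq> j" "{i, j} \<notin> E"
  then show "t * x i j = 0" using Z_pat[OF x] by simp
qed

lemma Z_sum: "finite I \<Longrightarrow> (\<And>i. i \<in> I \<Longrightarrow> f i \<in> Z) \<Longrightarrow> sum f I \<in> Z"
  by (induction I rule: finite_induct) (auto intro: Z_zero Z_add)

lemma Z_lin: "linear_subspace p Z"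
  unfolding linear_subspace_def
proof (intro conjI ballI allI)
  show "Z \<subseteq> Sym p" unfolding Z_G_C_def by (rule subsetI) (erule CollectE, erule conjunct1)
qed (use Z_zero Z_add Z_scale in blast)+

lemma ext_diag: "a < p \<Longrightarrow> a' < p \<Longrightarrow> b' < p \<Longrightarrow> ext_edge E a b \<Longrightarrow> ext_edge E a' b' \<Longrightarrow>
   c a b = c a' b' \<Longrightarrow> a = b \<longleftrightarrow> a' = b'"
proof -
  assume h: "a < p" "a' < p" "b' < p" "ext_edge E a b" "ext_edge E a' b'" "c a b = c a' b'"
  show ?thesis
  proof
    assume "a = b"
    then have "c a' b' = col {a}" using h by (simp add: cc_vv)
    then show "a' = b'" using cc_small[OF h(2), of b'] col_v[OF h(1)] by simp
  next
    assume "a' = b'"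
    then have "c a b = col {a'}" using h by (simp add: cc_vv)
    then show "a = b" using cc_small[OF h(1), of b] col_v[OF h(2)] by simp
  qed
qed

lemma idm_Z: "idm p \<in> Z"
proof (rule Z_intro)
  fix a b a' b' assume h: "a < p" "b < p" "a' < p" "b' < p"
    "ext_edge E a b" "ext_edge E a' b'" "c a b = c a' b'"
  then have "a = b \<longleftrightarrow> a' = b'" using ext_diag by blast
  then show "idm p a b = idm p a' b'" using h unfolding idm_def by simp
qed (auto simp: idm_def)

definition rM :: "nat \<Rightarrow> rmat \<Rightarrow> rmat" where
  "rM i x = (\<lambda>a b. if blk ns a = i \<and> blk ns b = i then x a b else 0)"

definition rL :: "nat \<Rightarrow> rmat \<Rightarrow> rmat" where
  "rL i x = (\<lambda>a b. if (blk ns a > blk ns b \<and> blk ns b = i) \<or> (blk ns b > blk ns a \<and> blk ns a = i)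
      then x a b else 0)"

lemma regM: "a < p \<Longrightarrow> b < p \<Longrightarrow> (blk ns a = i \<and> blk ns b = i) \<longleftrightarrow> (\<pi> a = \<pi> b \<and> min (\<pi> a) (\<pi> b) = i)"
  by (auto simp: blk_pos)

lemma regL: "a < p \<Longrightarrow> b < p \<Longrightarrow> ((blk ns a > blk ns b \<and> blk ns b = i) \<or> (blk ns b > blk ns a \<and> blk ns a = i))
   \<longleftrightarrow> (\<pi> a \<noteq> \<pi> b \<and> min (\<pi> a) (\<pi> b) = i)"
  by (auto simp: blk_pos min_def)

lemma rM_Z:
  assumes M1: "cond_M1 p E r R col \<eta>" and x: "x \<in> Z"
  shows "rM i x \<in> Z"
proof (rule Z_intro)
  fix a b a' b' assume h: "a < p" "b < p" "a' < p" "b' < p"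
    "ext_edge E a b" "ext_edge E a' b'" "c a b = c a' b'"
  have bi: "(\<pi> a = \<pi> b \<longleftrightarrow> \<pi> a' = \<pi> b') \<and> min (\<pi> a) (\<pi> b) = min (\<pi> a') (\<pi> b')"
    by (rule block_inv[OF M1 h])
  have e1: "(blk ns a = i \<and> blk ns b = i) = (blk ns a' = i \<and> blk ns b' = i)"
    unfolding regM[OF h(1,2)] regM[OF h(3,4)] using bi by auto
  show "rM i x a b = rM i x a' b'"
    unfolding rM_def e1 using Z_const[OF x h] by simp
next
  fix a b show "rM i x a b = rM i x b a"
    unfolding rM_def by (cases "blk ns a = i \<and> blk ns b = i") (auto intro: Z_sym[OF x])
qed (use x in \<open>auto simp: rM_def Z_out Z_pat\<close>)

lemma rL_Z:
  assumes M1: "cond_M1 p E r R col \<eta>" and x: "x \<in> Z"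
  shows "rL i x \<in> Z"
proof (rule Z_intro)
  fix a b a' b' assume h: "a < p" "b < p" "a' < p" "b' < p"
    "ext_edge E a b" "ext_edge E a' b'" "c a b = c a' b'"
  have bi: "(\<pi> a = \<pi> b \<longleftrightarrow> \<pi> a' = \<pi> b') \<and> min (\<pi> a) (\<pi> b) = min (\<pi> a') (\<pi> b')"
    by (rule block_inv[OF M1 h])
  have e1: "((blk ns a > blk ns b \<and> blk ns b = i) \<or> (blk ns b > blk ns a \<and> blk ns a = i))
     = ((blk ns a' > blk ns b' \<and> blk ns b' = i) \<or> (blk ns b' > blk ns a' \<and> blk ns a' = i))"
    unfolding regL[OF h(1,2)] regL[OF h(3,4)] using bi by auto
  show "rL i x a b = rL i x a' b'"
    unfolding rL_def e1 using Z_const[OF x h] by simp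
next
  fix a b show "rL i x a b = rL i x b a"
    unfolding rL_def by (cases "(blk ns a > blk ns b \<and> blk ns b = i) \<or> (blk ns b > blk ns a \<and> blk ns a = i)")
      (auto intro: Z_sym[OF x])
qed (use x in \<open>auto simp: rL_def Z_out Z_pat\<close>)

lemma rM_in: "cond_M1 p E r R col \<eta> \<Longrightarrow> x \<in> Z \<Longrightarrow> rM i x \<in> Mblk p ns Z i"
  unfolding Mblk_def using rM_Z by (auto simp: rM_def)

lemma rL_in: "cond_M1 p E r R col \<eta> \<Longrightarrow> x \<in> Z \<Longrightarrow> rL i x \<in> Lblk p ns Z i"
  unfolding Lblk_def using rL_Z by (auto simp: rL_def)

lemma decomp:
  assumes x: "x \<in> Z"
  shows "x = (\<Sum>i\<in>{1..r}. rM i x) + (\<Sum>i\<in>{1..r-1}. rL i x)"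
proof (rule ext, rule ext)
  fix a b
  show "x a b = ((\<Sum>i\<in>{1..r}. rM i x) + (\<Sum>i\<in>{1..r-1}. rL i x)) a b"
  proof (cases "a < p \<and> b < p")
    case True
    then have ab: "a < p" "b < p" by auto
    have pa: "\<pi> a \<in> {1..r}" and pb: "\<pi> b \<in> {1..r}" using pos_v ab by auto
    have s1: "(\<Sum>i\<in>{1..r}. rM i x a b) = (\<Sum>i\<in>{1..r}. if i = \<pi> a then (if \<pi> a = \<pi> b then x a b else 0) else 0)"
      by (rule sum.cong) (auto simp: rM_def regM[OF ab])
    have s2: "(\<Sum>i\<in>{1..r-1}. rL i x a b) = (\<Sum>i\<in>{1..r-1}. if i = min (\<pi> a) (\<pi> b) then (if \<pi> a \<noteq> \<pi> b then x a b else 0) else 0)"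
      by (rule sum.cong) (auto simp: rL_def regL[OF ab])
    have mn: "\<pi> a \<noteq> \<pi> b \<Longrightarrow> min (\<pi> a) (\<pi> b) \<in> {1..r-1}" using pa pb by (auto simp: min_def)
    show ?thesis using pa mn unfolding plus_fun_apply fun_sum_apply2 s1 s2 by (auto simp: sum.delta)
  next
    case False
    then have "x a b = 0" using Z_out[OF x] by auto
    moreover have "rM i x a b = 0" for i using \<open>x a b = 0\<close> by (simp add: rM_def)
    moreover have "rL i x a b = 0" for i using \<open>x a b = 0\<close> by (simp add: rL_def)
    ultimately show ?thesis unfolding plus_fun_apply fun_sum_apply2 by simp
  qed
qed

lemma uniq:
  assumes m: "\<forall>i\<in>{1..r}. m i \<in> Mblk p ns Z i" and l: "\<forall>i\<in>{1..r-1}. l i \<in> Lblk p ns Z i"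
    and z: "(\<Sum>i\<in>{1..r}. m i) + (\<Sum>i\<in>{1..r-1}. l i) = 0"
  shows "(\<forall>i\<in>{1..r}. m i = 0) \<and> (\<forall>i\<in>{1..r-1}. l i = 0)"
proof -
  have mZ: "m i \<in> Z" and mz: "\<And>a b. a < p \<Longrightarrow> b < p \<Longrightarrow> \<not> (blk ns a = i \<and> blk ns b = i) \<Longrightarrow> m i a b = 0"
    if "i \<in> {1..r}" for i using m that unfolding Mblk_def by auto
  have lZ: "l i \<in> Z" and lz: "\<And>a b. a < p \<Longrightarrow> b < p \<Longrightarrow>
      \<not> ((blk ns a > blk ns b \<and> blk ns b = i) \<or> (blk ns b > blk ns a \<and> blk ns a = i)) \<Longrightarrow> l i a b = 0"
    if "i \<in> {1..r-1}" for i using l that unfolding Lblk_def by auto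
  have zab: "(\<Sum>j\<in>{1..r}. m j a b) + (\<Sum>j\<in>{1..r-1}. l j a b) = 0" for a b
    using fun_cong[OF fun_cong[OF z, of a], of b] unfolding plus_fun_apply fun_sum_apply2 by simp
  have A: "m i a b = 0" if i: "i \<in> {1..r}" for i a b
  proof (cases "a < p \<and> b < p")
    case False then show ?thesis using Z_out[OF mZ[OF i]] by auto
  next
    case True
    then have ab: "a < p" "b < p" by auto
    show ?thesis
    proof (cases "blk ns a = i \<and> blk ns b = i")
      case False then show ?thesis using mz[OF i ab] by simp
    next
      case bi: True
      have "(\<Sum>j\<in>{1..r}. m j a b) = (\<Sum>j\<in>{1..r}. if j = i then m i a b else 0)"
        by (rule sum.cong) (use mz[OF _ ab] bi in auto)
      moreover have "(\<Sum>j\<in>{1..r-1}. l j a b) = 0"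
        by (rule sum.neutral) (use lz[OF _ ab] bi in auto)
      ultimately show ?thesis using zab[of a b] i by simp
    qed
  qed
  have B: "l i a b = 0" if i: "i \<in> {1..r-1}" for i a b
  proof (cases "a < p \<and> b < p")
    case False then show ?thesis using Z_out[OF lZ[OF i]] by auto
  next
    case True
    then have ab: "a < p" "b < p" by auto
    show ?thesis
    proof (cases "(blk ns a > blk ns b \<and> blk ns b = i) \<or> (blk ns b > blk ns a \<and> blk ns a = i)")
      case False then show ?thesis using lz[OF i ab] by simp
    next
      case bi: True
      have "(\<Sum>j\<in>{1..r-1}. l j a b) = (\<Sum>j\<in>{1..r-1}. if j = i then l i a b else 0)"
        by (rule sum.cong) (use lz[OF _ ab] bi in auto)
      moreover have "(\<Sum>j\<in>{1..r}. m j a b) = 0"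
        by (rule sum.neutral) (use mz[OF _ ab] bi in auto)
      ultimately show ?thesis using zab[of a b] i by simp
    qed
  qed
  show ?thesis using A B by (auto simp: fun_eq_iff)
qed

lemma direct_sum:
  assumes M1: "cond_M1 p E r R col \<eta>"
  shows "block_direct_sum p r ns Z"
  unfolding block_direct_sum_def
proof (rule conjI)
  show "Z = {(\<Sum>i\<in>{1..r}. m i) + (\<Sum>i\<in>{1..r-1}. l i) | m l.
            (\<forall>i\<in>{1..r}. m i \<in> Mblk p ns Z i) \<and> (\<forall>i\<in>{1..r-1}. l i \<in> Lblk p ns Z i)}"
  proof (rule set_eqI, rule iffI)
    fix x assume x: "x \<in> Z"
    show "x \<in> {(\<Sum>i\<in>{1..r}. m i) + (\<Sum>i\<in>{1..r-1}. l i) | m l.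
            (\<forall>i\<in>{1..r}. m i \<in> Mblk p ns Z i) \<and> (\<forall>i\<in>{1..r-1}. l i \<in> Lblk p ns Z i)}"
      using decomp[OF x] rM_in[OF M1 x] rL_in[OF M1 x] by blast
  next
    fix x assume "x \<in> {(\<Sum>i\<in>{1..r}. m i) + (\<Sum>i\<in>{1..r-1}. l i) | m l.
            (\<forall>i\<in>{1..r}. m i \<in> Mblk p ns Z i) \<and> (\<forall>i\<in>{1..r-1}. l i \<in> Lblk p ns Z i)}"
    then obtain m l where x: "x = (\<Sum>i\<in>{1..r}. m i) + (\<Sum>i\<in>{1..r-1}. l i)"
      and m: "\<forall>i\<in>{1..r}. m i \<in> Mblk p ns Z i" and l: "\<forall>i\<in>{1..r-1}. l i \<in> Lblk p ns Z i" by blast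
    have "(\<Sum>i\<in>{1..r}. m i) \<in> Z" using m by (intro Z_sum) (auto simp: Mblk_def)
    moreover have "(\<Sum>i\<in>{1..r-1}. l i) \<in> Z" using l by (intro Z_sum) (auto simp: Lblk_def)
    ultimately show "x \<in> Z" using x Z_add by simp
  qed
next
  show "\<forall>m l. (\<forall>i\<in>{1..r}. m i \<in> Mblk p ns Z i) \<and> (\<forall>i\<in>{1..r-1}. l i \<in> Lblk p ns Z i) \<and>
            (\<Sum>i\<in>{1..r}. m i) + (\<Sum>i\<in>{1..r-1}. l i) = 0
        \<longrightarrow> (\<forall>i\<in>{1..r}. m i = 0) \<and> (\<forall>i\<in>{1..r-1}. l i = 0)"
    using uniq by blast
qed

end

context S begin

lemma cpeo_zero:
  assumes x: "x \<in> Z" and y: "y \<in> Z" and ab: "a < p" "b < p" "a \<noteq> b" "{a, b} \<notin> E"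
    and u: "u < p" "\<pi> u \<le> \<pi> a" "\<pi> u \<le> \<pi> b"
  shows "x a u * y u b = 0"
proof (rule ccontr)
  assume nz: "x a u * y u b \<noteq> 0"
  then have xz: "x a u \<noteq> 0" and yz: "y u b \<noteq> 0" by auto
  show False
  proof (cases "u = a")
    case True then show ?thesis using yz Z_pat[OF y ab] by simp
  next
    case ua: False
    show ?thesis
    proof (cases "u = b")
      case True then show ?thesis using xz Z_pat[OF x ab] by simp
    next
      case ub: False
      have e1: "{u, a} \<in> E" using xz Z_pat[OF x ab(1) u(1)] ua by (auto simp: insert_commute)
      have e2: "{u, b} \<in> E" using yz Z_pat[OF y u(1) ab(2)] ub by auto
      have pu: "\<pi> u \<in> {1..r}" using pos_v[OF u(1)] by simp
      have "{a, b} \<in> E"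
        using cpeo[unfolded cpeo_def, rule_format, OF pu u(1) refl ab(1) ab(2)] u e1 e2 ab(3) by blast
      then show ?thesis using ab(4) by simp
    qed
  qed
qed

abbreviation "KK \<equiv> {0..r+R}"

lemma mto_set: "card {u \<in> {u \<in> {..<p}. \<pi> u \<le> min (\<pi> a) (\<pi> b)}. c a u = k \<and> c u b = h}
    = mto p E r col \<eta> a b k h"
  unfolding mto_def by (rule arg_cong[where f = card]) auto

lemma fiber_entry:
  assumes a: "a < p"
  shows "(\<Sum>u\<in>{u \<in> {..<p}. \<pi> u \<le> min (\<pi> a) (\<pi> b)}. f (c a u) (c u b))
     = (\<Sum>k\<in>KK. \<Sum>h\<in>KK. f k h * real (mto p E r col \<eta> a b k h))"
  unfolding mto_set[symmetric]
  by (rule fiber_sum) (use a cc_range in auto)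

lemma mto_swap: "mto p E r col \<eta> b a k h = mto p E r col \<eta> a b h k"
  unfolding mto_def by (rule arg_cong[where f = card]) (auto simp: cc_sym min.commute)


definition TT :: "rmat \<Rightarrow> nat \<Rightarrow> nat \<Rightarrow> real" where
  "TT x a b = (\<Sum>k\<in>KK. \<Sum>h\<in>KK. coef x k * coef x h * real (mto p E r col \<eta> a b k h))"

lemma Z1_entry:
  assumes x: "x \<in> Z" and ab: "a < p" "b < p"
  shows "mmul p (BlockTri ns x) (mtrans (BlockTri ns x)) a b = TT x a b"
proof -
  have "mmul p (BlockTri ns x) (mtrans (BlockTri ns x)) a b
      = (\<Sum>u\<in>{..<p}. if \<pi> u \<le> min (\<pi> a) (\<pi> b) then coef x (c a u) * coef x (c u b) else 0)"
    unfolding mmul_def mtrans_def BlockTri_def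
  proof (rule sum.cong)
    fix u assume "u \<in> {..<p}"
    then have u: "u < p" by simp
    have "x b u = coef x (c u b)" using coef_eq[OF x ab(2) u] cc_sym by simp
    then show "(if blk ns u \<le> blk ns a then x a u else 0) * (if blk ns u \<le> blk ns b then x b u else 0)
        = (if \<pi> u \<le> min (\<pi> a) (\<pi> b) then coef x (c a u) * coef x (c u b) else 0)"
      using coef_eq[OF x ab(1) u] blk_pos u ab by auto
  qed simp
  also have "\<dots> = (\<Sum>u\<in>{u \<in> {..<p}. \<pi> u \<le> min (\<pi> a) (\<pi> b)}. coef x (c a u) * coef x (c u b))"
    by (rule sum.inter_filter[symmetric]) simp
  also have "\<dots> = TT x a b" unfolding TT_def by (rule fiber_entry[OF ab(1)])
  finally show ?thesis .
qed

lemma TT_both: "2 * TT x a b = (\<Sum>k\<in>KK. \<Sum>h\<in>KK. coef x k * coef x h * real (mboth p E r col \<eta> a b k h))"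
proof -
  have sw: "(\<Sum>k\<in>KK. \<Sum>h\<in>KK. coef x k * coef x h * real (mto p E r col \<eta> a b h k)) = TT x a b"
    unfolding TT_def by (subst sum.swap) (simp add: mult.commute mult.left_commute)
  show ?thesis
    unfolding mboth_def of_nat_add distrib_left sum.distrib sw by (simp add: TT_def)
qed

lemma TT_eq:
  assumes M1: "cond_M1 p E r R col \<eta>" and h: "a < p" "b < p" "a' < p" "b' < p"
    "ext_edge E a b" "ext_edge E a' b'" "c a b = c a' b'"
  shows "TT x a b = TT x a' b'"
proof -
  have "(\<Sum>k\<in>KK. \<Sum>h\<in>KK. coef x k * coef x h * real (mboth p E r col \<eta> a b k h))
      = (\<Sum>k\<in>KK. \<Sum>h\<in>KK. coef x k * coef x h * real (mboth p E r col \<eta> a' b' k h))"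
  proof (intro sum.cong refl)
    fix k h assume k: "k \<in> KK" and hh: "h \<in> KK"
    show "coef x k * coef x h * real (mboth p E r col \<eta> a b k h) = coef x k * coef x h * real (mboth p E r col \<eta> a' b' k h)"
    proof (cases "k = 0 \<or> h = 0")
      case True then show ?thesis by (auto simp: coef0)
    next
      case False
      then have "k \<in> {1..r+R}" "h \<in> {1..r+R}" using k hh by auto
      then have "mboth p E r col \<eta> a b k h = mboth p E r col \<eta> a' b' k h"
        using M1[unfolded cond_M1_def, rule_format, OF h(1-4)] h(5-7) by blast
      then show ?thesis by simp
    qed
  qed
  then have "2 * TT x a b = 2 * TT x a' b'" unfolding TT_both .
  then show ?thesis by simp
qed

lemma Z1:
  assumes M1: "cond_M1 p E r R col \<eta>" and x: "x \<in> Z"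
  shows "mmul p (BlockTri ns x) (mtrans (BlockTri ns x)) \<in> Z"
proof (rule Z_intro)
  fix i j show "mmul p (BlockTri ns x) (mtrans (BlockTri ns x)) i j = mmul p (BlockTri ns x) (mtrans (BlockTri ns x)) j i"
    unfolding mmul_def mtrans_def by (simp add: mult.commute)
next
  fix i j assume "p \<le> i \<or> p \<le> j"
  then have h0: "BlockTri ns x i k * BlockTri ns x j k = 0" for k
    using Z_out[OF x] unfolding BlockTri_def by auto
  show "mmul p (BlockTri ns x) (mtrans (BlockTri ns x)) i j = 0"
    unfolding mmul_def mtrans_def by (rule sum.neutral, rule ballI, rule h0)
next
  fix a b assume ab: "a < p" "b < p" "a \<noteq> b" "{a, b} \<notin> E"
  have h0: "BlockTri ns x a u * BlockTri ns x b u = 0" if u: "u < p" for u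
  proof (cases "\<pi> u \<le> \<pi> a \<and> \<pi> u \<le> \<pi> b")
    case True
    have "x a u * x u b = 0" by (rule cpeo_zero[OF x x ab u]) (use True in auto)
    moreover have "x b u = x u b" by (rule Z_sym[OF x])
    ultimately show ?thesis using True u ab unfolding BlockTri_def by (simp add: blk_pos)
  next
    case False then show ?thesis using u ab unfolding BlockTri_def by (auto simp: blk_pos)
  qed
  show "mmul p (BlockTri ns x) (mtrans (BlockTri ns x)) a b = 0"
    unfolding mmul_def mtrans_def by (rule sum.neutral) (use h0 in simp)
next
  fix a b a' b' assume h: "a < p" "b < p" "a' < p" "b' < p"
    "ext_edge E a b" "ext_edge E a' b'" "c a b = c a' b'"
  show "mmul p (BlockTri ns x) (mtrans (BlockTri ns x)) a b = mmul p (BlockTri ns x) (mtrans (BlockTri ns x)) a' b'"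
    using Z1_entry[OF x h(1,2)] Z1_entry[OF x h(3,4)] TT_eq[OF M1 h] by simp
qed

end

context S begin

abbreviation "FF \<equiv> Fset p E r col"

lemma F_range: "k \<in> FF \<Longrightarrow> k \<in> {1..r+R}"
  unfolding Fset_def using cc_ext cc_range by fastforce

lemma F_in: "a < p \<Longrightarrow> u < p \<Longrightarrow> \<pi> a = \<pi> u \<Longrightarrow> ext_edge E a u \<Longrightarrow> c a u \<in> FF"
proof -
  assume h: "a < p" "u < p" "\<pi> a = \<pi> u" "ext_edge E a u"
  then have "col {a} = col {u}" using pos_iff by blast
  moreover have "col {a} \<in> {1..r}" using col_v h(1) by blast
  ultimately show ?thesis unfolding Fset_def mem_Collect_eq
    by (intro exI[of _ a] exI[of _ u]) (use h in auto)
qed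

lemma F_same:
  assumes M1: "cond_M1 p E r R col \<eta>" and h: "a < p" "u < p" "c a u \<in> FF"
  shows "\<pi> a = \<pi> u"
proof -
  obtain v w i where vw: "c a u = c v w" "v < p" "w < p" "ext_edge E v w" "col {v} = i" "col {w} = i"
    using h(3) unfolding Fset_def by blast
  have "c a u \<noteq> 0" using F_range[OF h(3)] by simp
  then have e: "ext_edge E a u" using cc_nonext[of a u] by argo
  have "\<pi> v = \<pi> w" using pos_iff vw by simp
  then show ?thesis using block_inv[OF M1 h(1,2) vw(2,3) e vw(4) vw(1)] by simp
qed

definition DD :: "rmat \<Rightarrow> rmat \<Rightarrow> nat \<Rightarrow> nat \<Rightarrow> real" where
  "DD x y a b = (\<Sum>k\<in>KK. \<Sum>h\<in>KK. (if k \<in> FF \<and> h \<in> FF then coef x k * coef y h else 0) * real (mto p E r col \<eta> a b k h))"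

abbreviation "BDP x y \<equiv> mmul p (BlockDiag ns x) (BlockDiag ns y)"

lemma Z2_entry:
  assumes M1: "cond_M1 p E r R col \<eta>" and x: "x \<in> Z" and y: "y \<in> Z" and ab: "a < p" "b < p" "\<pi> a = \<pi> b"
  shows "BDP x y a b = DD x y a b"
proof -
  let ?f = "\<lambda>k h. if k \<in> FF \<and> h \<in> FF then coef x k * coef y h else 0"
  have "BDP x y a b = (\<Sum>u\<in>{..<p}. if \<pi> u \<le> min (\<pi> a) (\<pi> b) then ?f (c a u) (c u b) else 0)"
    unfolding mmul_def BlockDiag_def
  proof (rule sum.cong)
    fix u assume "u \<in> {..<p}"
    then have u: "u < p" by simp
    have xa: "x a u = coef x (c a u)" by (rule coef_eq[OF x ab(1) u])
    have yb: "y u b = coef y (c u b)" by (rule coef_eq[OF y u ab(2)])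
    show "(if blk ns a = blk ns u then x a u else 0) * (if blk ns u = blk ns b then y u b else 0)
        = (if \<pi> u \<le> min (\<pi> a) (\<pi> b) then ?f (c a u) (c u b) else 0)"
    proof (cases "\<pi> u = \<pi> a")
      case True
      have "coef x (c a u) * coef y (c u b) = ?f (c a u) (c u b)"
      proof (cases "c a u \<in> FF \<and> c u b \<in> FF")
        case False
        then consider "c a u \<notin> FF" | "c u b \<notin> FF" by blast
        then show ?thesis
        proof cases
          case 1
          then have "\<not> ext_edge E a u" using F_in[OF ab(1) u] True by auto
          then have "c a u = 0" by (rule cc_nonext)
          then show ?thesis using 1 by (simp add: coef0)
        next
          case 2
          then have "\<not> ext_edge E u b" using F_in[OF u ab(2)] True ab(3) by auto
          then have "c u b = 0" by (rule cc_nonext)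
          then show ?thesis using 2 by (simp add: coef0)
        qed
      qed simp
      then show ?thesis using True ab u xa yb by (simp add: blk_pos)
    next
      case False
      have "c a u \<notin> FF" using F_same[OF M1 ab(1) u] False by auto
      then show ?thesis using False ab u by (simp add: blk_pos)
    qed
  qed simp
  also have "\<dots> = (\<Sum>u\<in>{u \<in> {..<p}. \<pi> u \<le> min (\<pi> a) (\<pi> b)}. ?f (c a u) (c u b))"
    by (rule sum.inter_filter[symmetric]) simp
  also have "\<dots> = DD x y a b" unfolding DD_def by (rule fiber_entry[OF ab(1)])
  finally show ?thesis .
qed

lemma Z2_cross:
  assumes ab: "a < p" "b < p" "\<pi> a \<noteq> \<pi> b"
  shows "BDP x y a b = 0"
  unfolding mmul_def BlockDiag_def
  by (rule sum.neutral) (use ab in \<open>auto simp: blk_pos\<close>)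

lemma Z2_out:
  assumes x: "x \<in> Z" and y: "y \<in> Z" and ab: "p \<le> a \<or> p \<le> b"
  shows "BDP x y a b = 0"
  unfolding mmul_def BlockDiag_def
  by (rule sum.neutral) (use ab Z_out[OF x] Z_out[OF y] in auto)

lemma mto_sym2:
  assumes M1: "cond_M1 p E r R col \<eta>" and M2: "cond_M2 p E r col \<eta>"
    and ab: "a < p" "b < p" "\<pi> a = \<pi> b" and kh: "k \<in> FF" "h \<in> FF"
  shows "2 * mto p E r col \<eta> a b k h = mboth p E r col \<eta> a b k h"
proof -
  have cab: "col {a} = col {b}" using pos_iff ab by blast
  have "mto p E r col \<eta> a b k h = mto p E r col \<eta> b a k h"
    using M2[unfolded cond_M2_def, rule_format, OF ab(1,2) cab kh] .
  also have "\<dots> = mto p E r col \<eta> a b h k" by (rule mto_swap)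
  finally show ?thesis unfolding mboth_def by simp
qed

lemma Z2:
  assumes M1: "cond_M1 p E r R col \<eta>" and M2: "cond_M2 p E r col \<eta>" and x: "x \<in> Z" and y: "y \<in> Z"
  shows "BDP x y \<in> Z"
proof (rule Z_intro)
  fix a b
  show "BDP x y a b = BDP x y b a"
  proof (cases "a < p \<and> b < p")
    case False then show ?thesis using Z2_out[OF x y] by auto
  next
    case True
    then have ab: "a < p" "b < p" by auto
    show ?thesis
    proof (cases "\<pi> a = \<pi> b")
      case False then show ?thesis using Z2_cross ab by metis
    next
      case True
      have cab: "col {a} = col {b}" using pos_iff ab True by blast
      have "DD x y a b = DD x y b a" unfolding DD_def
      proof (intro sum.cong refl)
        fix k h
        show "(if k \<in> FF \<and> h \<in> FF then coef x k * coef y h else 0) * real (mto p E r col \<eta> a b k h)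
            = (if k \<in> FF \<and> h \<in> FF then coef x k * coef y h else 0) * real (mto p E r col \<eta> b a k h)"
          using M2[unfolded cond_M2_def, rule_format, OF ab cab, of k h] by auto
      qed
      then show ?thesis using Z2_entry[OF M1 x y ab True] Z2_entry[OF M1 x y ab(2,1) True[symmetric]] by simp
    qed
  qed
next
  fix i j assume "p \<le> i \<or> p \<le> j" then show "BDP x y i j = 0" using Z2_out[OF x y] by blast
next
  fix a b assume ab: "a < p" "b < p" "a \<noteq> b" "{a, b} \<notin> E"
  have h0: "BlockDiag ns x a u * BlockDiag ns y u b = 0" if u: "u < p" for u
  proof (cases "\<pi> u = \<pi> a \<and> \<pi> u = \<pi> b")
    case True
    have "x a u * y u b = 0" by (rule cpeo_zero[OF x y ab u]) (use True in auto)
    then show ?thesis using True u ab unfolding BlockDiag_def by (simp add: blk_pos)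
  next
    case False then show ?thesis using u ab unfolding BlockDiag_def by (auto simp: blk_pos)
  qed
  show "BDP x y a b = 0"
    unfolding mmul_def by (rule sum.neutral) (use h0 in simp)
next
  fix a b a' b' assume h: "a < p" "b < p" "a' < p" "b' < p"
    "ext_edge E a b" "ext_edge E a' b'" "c a b = c a' b'"
  have bi: "(\<pi> a = \<pi> b \<longleftrightarrow> \<pi> a' = \<pi> b')" using block_inv[OF M1 h] by blast
  show "BDP x y a b = BDP x y a' b'"
  proof (cases "\<pi> a = \<pi> b")
    case False
    then show ?thesis using Z2_cross[OF h(1,2)] Z2_cross[OF h(3,4)] bi by simp
  next
    case True
    then have True': "\<pi> a' = \<pi> b'" using bi by simp
    have "DD x y a b = DD x y a' b'" unfolding DD_def
    proof (intro sum.cong refl)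
      fix k h
      show "(if k \<in> FF \<and> h \<in> FF then coef x k * coef y h else 0) * real (mto p E r col \<eta> a b k h)
          = (if k \<in> FF \<and> h \<in> FF then coef x k * coef y h else 0) * real (mto p E r col \<eta> a' b' k h)"
      proof (cases "k \<in> FF \<and> h \<in> FF")
        case kh: True
        have "mboth p E r col \<eta> a b k h = mboth p E r col \<eta> a' b' k h"
          using M1[unfolded cond_M1_def, rule_format, OF h(1-4)] h(5-7) F_range kh by blast
        then have "mto p E r col \<eta> a b k h = mto p E r col \<eta> a' b' k h"
          using mto_sym2[OF M1 M2 h(1,2) True] mto_sym2[OF M1 M2 h(3,4) True'] kh by (metis mult_left_cancel zero_neq_numeral)
        then show ?thesis by simp
      qed auto
    qed
    then show ?thesis using Z2_entry[OF M1 x y h(1,2) True] Z2_entry[OF M1 x y h(3,4) True'] by simp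
  qed
qed

end

theorem theorem4p2:
  fixes p r R :: nat and E :: "nat set set" and col :: "nat set \<Rightarrow> nat"
    and \<eta> :: "nat \<Rightarrow> nat" and ns :: "nat \<Rightarrow> nat"
  assumes graph: "simple_graph p E"
    and coloring: "is_coloring p E r R col"
    and eta: "bij_betw \<eta> {1..r} {1..r}"
    and cpeo: "cpeo p E r col \<eta>"
    and ns_def: "\<forall>i\<in>{1..r}. ns i = card {v. v < p \<and> col {v} = \<eta> i}"
    and numbering: "\<forall>i\<in>{1..r}. {v. v < p \<and> col {v} = \<eta> i} = {cumN ns (i - 1) ..< cumN ns i}"
  shows "(CER p E r R col \<eta> \<longrightarrow> BC_space p r ns (Z_G_C p E col))
       \<and> (symCER p E r R col \<eta> \<longrightarrow> cBC_space p r ns (Z_G_C p E col))"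
proof -
  interpret S p r R E col \<eta> ns
    by (unfold_locales) (use graph coloring eta cpeo numbering in auto)
  have BC: "BC_space p r ns (Z_G_C p E col)" if M1: "cond_M1 p E r R col \<eta>"
    unfolding BC_space_def using Z_lin idm_Z direct_sum[OF M1] Z1[OF M1] by blast
  show ?thesis
  proof (intro conjI impI)
    assume "CER p E r R col \<eta>"
    then have M1: "cond_M1 p E r R col \<eta>" unfolding CER_def by blast
    show "BC_space p r ns (Z_G_C p E col)" by (rule BC[OF M1])
  next
    assume "symCER p E r R col \<eta>"
    then have M1: "cond_M1 p E r R col \<eta>" and M2: "cond_M2 p E r col \<eta>"
      unfolding symCER_def CER_def by blast+
    show "cBC_space p r ns (Z_G_C p E col)"
      unfolding cBC_space_def using BC[OF M1] Z2[OF M1 M2] by blast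
  qed
qed

end
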